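(* Let $f\colon X\to Y$ be a large scale uniform function between metric spaces. Then $$\operatorname{asdim}(X)\leq \operatorname{asdim}(f)+\operatorname{asdim}(Y).$$
   Context: For a metric space $X$ and $n\ge 0$: $\operatorname{asdim}(X)\le n$ means that for every $r>0$ there are $D<\infty$ and families $\mathcal U_1,\dots,\mathcal U_{n+1}$ of subsets of $X$ such that $\bigcup_i\mathcal U_i$ covers $X$, each $\mathcal U_i$ is $r$-disjoint (i.e. $d(a,b)\ge r$ whenever $a,b$ lie in different members of $\mathcal U_i$), and every member of every $\mathcal U_i$ has diameter at most $D$. $\operatorname{asdim}(X)$ is the least such $n$ ($\infty$ if none exists). A function $f\colon X\to Y$ is large scale uniform if there is $c_f\colon\mathbb R_+\to\mathbb R_+$ with $d_X(x,y)\le r\Rightarrow d_Y(f(x),f(y))\le c_f(r)$. The asymptotic dimension of a function $f\colon X\to Y$ is $\operatorname{asdim}(f)=\sup\{\operatorname{asdim}(A): A\subset X,\ \operatorname{asdim}(f(A))=0\}$ (with the metrics restricted from $X$ and $Y$). *)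

theory Defs
  imports "HOL-Analysis.Analysis" "HOL-Library.Extended_Nat"
begin

text \<open>Metric spaces are modelled as subsets of a type of class metric_space,
  with the restricted metric.  asdim_le S n: for every r > 0 there are a bound D
  and n+1 families U 0, ..., U n of subsets of S covering S, each r-disjoint,
  all members of diameter at most D.\<close>

definition asdim_le :: "'a::metric_space set \<Rightarrow> nat \<Rightarrow> bool" where
  "asdim_le S n \<longleftrightarrow>
    (\<forall>r>0. \<exists>D::real. \<exists>U :: nat \<Rightarrow> 'a set set.
       (\<forall>i\<le>n. \<forall>A\<in>U i. A \<subseteq> S) \<and>
       (\<Union>i\<le>n. \<Union>(U i)) = S \<and>
       (\<forall>i\<le>n. \<forall>A\<in>U i. \<forall>B\<in>U i. A \<noteq> B \<longrightarrow> (\<forall>a\<in>A. \<forall>b\<in>B. dist a b \<ge> r)) \<and>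
       (\<forall>i\<le>n. \<forall>A\<in>U i. \<forall>a\<in>A. \<forall>b\<in>A. dist a b \<le> D))"

definition asdim :: "'a::metric_space set \<Rightarrow> enat" where
  "asdim S = (if \<exists>n. asdim_le S n then enat (LEAST n. asdim_le S n) else \<infinity>)"

definition large_scale_uniform :: "'a::metric_space set \<Rightarrow> ('a \<Rightarrow> 'b::metric_space) \<Rightarrow> bool" where
  "large_scale_uniform X f \<longleftrightarrow>
    (\<exists>c::real \<Rightarrow> real. \<forall>r\<ge>0. \<forall>x\<in>X. \<forall>y\<in>X. dist x y \<le> r \<longrightarrow> dist (f x) (f y) \<le> c r)"

definition asdim_fun :: "'a::metric_space set \<Rightarrow> ('a \<Rightarrow> 'b::metric_space) \<Rightarrow> enat" where
  "asdim_fun X f = Sup {asdim A | A. A \<subseteq> X \<and> asdim (f ` A) = 0}"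

end

theory Submission
  imports Defs
begin

definition colorable :: "'a::metric_space set \<Rightarrow> nat \<Rightarrow> real \<Rightarrow> real \<Rightarrow> bool" where
  "colorable S n r D \<longleftrightarrow> (\<exists>U :: nat \<Rightarrow> 'a set set.
       (\<forall>i\<le>n. \<forall>A\<in>U i. A \<subseteq> S) \<and>
       (\<Union>i\<le>n. \<Union>(U i)) = S \<and>
       (\<forall>i\<le>n. \<forall>A\<in>U i. \<forall>B\<in>U i. A \<noteq> B \<longrightarrow> (\<forall>a\<in>A. \<forall>b\<in>B. dist a b \<ge> r)) \<and>
       (\<forall>i\<le>n. \<forall>A\<in>U i. \<forall>a\<in>A. \<forall>b\<in>A. dist a b \<le> D))"

lemma colorableE:
  assumes "colorable S n r D"
  obtains U where "\<forall>i\<le>n. \<forall>A\<in>U i. A \<subseteq> S" "(\<Union>i\<le>n. \<Union>(U i)) = S"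
    "\<forall>i\<le>n. \<forall>A\<in>U i. \<forall>B\<in>U i. A \<noteq> B \<longrightarrow> (\<forall>a\<in>A. \<forall>b\<in>B. dist a b \<ge> r)"
    "\<forall>i\<le>n. \<forall>A\<in>U i. \<forall>a\<in>A. \<forall>b\<in>A. dist a b \<le> D"
  using assms unfolding colorable_def by (elim exE conjE) (rule that)

lemma colorableI:
  assumes "\<forall>i\<le>n. \<forall>A\<in>U i. A \<subseteq> S" "(\<Union>i\<le>n. \<Union>(U i)) = S"
    "\<forall>i\<le>n. \<forall>A\<in>U i. \<forall>B\<in>U i. A \<noteq> B \<longrightarrow> (\<forall>a\<in>A. \<forall>b\<in>B. dist a b \<ge> r)"
    "\<forall>i\<le>n. \<forall>A\<in>U i. \<forall>a\<in>A. \<forall>b\<in>A. dist a b \<le> D"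
  shows "colorable S n r D"
  unfolding colorable_def using assms by (intro exI conjI)

lemma asdim_le_colorable: "asdim_le S n \<longleftrightarrow> (\<forall>r>0. \<exists>D. colorable S n r D)"
  unfolding asdim_le_def colorable_def by blast

lemma colorable_mono_bound: "colorable S n r D \<Longrightarrow> D \<le> D' \<Longrightarrow> colorable S n r D'"
  unfolding colorable_def by (erule ex_forward) (meson order_trans)

lemma colorable_subset:
  assumes "colorable S n r D" "T \<subseteq> S"
  shows "colorable T n r D"
proof -
  obtain U where U: "\<forall>i\<le>n. \<forall>A\<in>U i. A \<subseteq> S" "(\<Union>i\<le>n. \<Union>(U i)) = S"
    "\<forall>i\<le>n. \<forall>A\<in>U i. \<forall>B\<in>U i. A \<noteq> B \<longrightarrow> (\<forall>a\<in>A. \<forall>b\<in>B. dist a b \<ge> r)"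
    "\<forall>i\<le>n. \<forall>A\<in>U i. \<forall>a\<in>A. \<forall>b\<in>A. dist a b \<le> D"
    using assms(1) by (rule colorableE)
  define U' where "U' i = (\<lambda>A. A \<inter> T) ` U i" for i
  have "(\<forall>i\<le>n. \<forall>A\<in>U' i. A \<subseteq> T)" unfolding U'_def by auto
  moreover have "(\<Union>i\<le>n. \<Union>(U' i)) = T"
  proof
    show "(\<Union>i\<le>n. \<Union>(U' i)) \<subseteq> T" unfolding U'_def by auto
    show "T \<subseteq> (\<Union>i\<le>n. \<Union>(U' i))"
    proof
      fix x assume "x \<in> T"
      then have "x \<in> S" using assms(2) by auto
      then obtain i A where "i \<le> n" "A \<in> U i" "x \<in> A" using U(2) by blast
      then show "x \<in> (\<Union>i\<le>n. \<Union>(U' i))" unfolding U'_def using \<open>x \<in> T\<close> by blast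
    qed
  qed
  moreover have "\<forall>i\<le>n. \<forall>A\<in>U' i. \<forall>B\<in>U' i. A \<noteq> B \<longrightarrow> (\<forall>a\<in>A. \<forall>b\<in>B. dist a b \<ge> r)"
  proof (intro allI impI ballI)
    fix i A' B' a b assume i: "i \<le> n" and A': "A' \<in> U' i" and B': "B' \<in> U' i" and ne: "A' \<noteq> B'"
      and a: "a \<in> A'" and b: "b \<in> B'"
    obtain A where A: "A \<in> U i" "A' = A \<inter> T" using A' unfolding U'_def by blast
    obtain B where B: "B \<in> U i" "B' = B \<inter> T" using B' unfolding U'_def by blast
    have "A \<noteq> B" using ne A B by blast
    then show "dist a b \<ge> r" using U(3) i A B a b by blast
  qed
  moreover have "\<forall>i\<le>n. \<forall>A\<in>U' i. \<forall>a\<in>A. \<forall>b\<in>A. dist a b \<le> D"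
    unfolding U'_def using U(4) by auto
  ultimately show ?thesis by (intro colorableI)
qed

lemma asdim_le_subset: "asdim_le S n \<Longrightarrow> T \<subseteq> S \<Longrightarrow> asdim_le T n"
  unfolding asdim_le_colorable using colorable_subset by blast

lemma colorable_mono_n:
  assumes "colorable S n r D" "n \<le> n'"
  shows "colorable S n' r D"
proof -
  obtain U where U: "\<forall>i\<le>n. \<forall>A\<in>U i. A \<subseteq> S" "(\<Union>i\<le>n. \<Union>(U i)) = S"
    "\<forall>i\<le>n. \<forall>A\<in>U i. \<forall>B\<in>U i. A \<noteq> B \<longrightarrow> (\<forall>a\<in>A. \<forall>b\<in>B. dist a b \<ge> r)"
    "\<forall>i\<le>n. \<forall>A\<in>U i. \<forall>a\<in>A. \<forall>b\<in>A. dist a b \<le> D"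
    using assms(1) by (rule colorableE)
  define U' where "U' i = (if i \<le> n then U i else {})" for i
  have "(\<Union>i\<le>n'. \<Union>(U' i)) = (\<Union>i\<le>n. \<Union>(U i))"
  proof (rule equalityI; rule subsetI)
    fix x assume "x \<in> (\<Union>i\<le>n'. \<Union>(U' i))"
    then obtain i A where "i \<le> n'" "A \<in> U' i" "x \<in> A" by blast
    then have "i \<le> n" "A \<in> U i" unfolding U'_def by (auto split: if_splits)
    then show "x \<in> (\<Union>i\<le>n. \<Union>(U i))" using \<open>x \<in> A\<close> by blast
  next
    fix x assume "x \<in> (\<Union>i\<le>n. \<Union>(U i))"
    then obtain i A where "i \<le> n" "A \<in> U i" "x \<in> A" by blast
    then have "i \<le> n'" "A \<in> U' i" unfolding U'_def using assms(2) by auto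
    then show "x \<in> (\<Union>i\<le>n'. \<Union>(U' i))" using \<open>x \<in> A\<close> by blast
  qed
  moreover have "\<forall>i\<le>n'. \<forall>A\<in>U' i. A \<subseteq> S" using U(1) unfolding U'_def by simp
  moreover have "\<forall>i\<le>n'. \<forall>A\<in>U' i. \<forall>B\<in>U' i. A \<noteq> B \<longrightarrow> (\<forall>a\<in>A. \<forall>b\<in>B. dist a b \<ge> r)"
    using U(3) unfolding U'_def by simp
  moreover have "\<forall>i\<le>n'. \<forall>A\<in>U' i. \<forall>a\<in>A. \<forall>b\<in>A. dist a b \<le> D"
    using U(4) unfolding U'_def by simp
  ultimately show ?thesis using U(2) by (intro colorableI) auto
qed

lemma asdim_le_mono: "asdim_le S n \<Longrightarrow> n \<le> n' \<Longrightarrow> asdim_le S n'"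
  unfolding asdim_le_colorable using colorable_mono_n by blast

lemma asdim_le_bounded0:
  assumes "\<forall>a\<in>S. \<forall>b\<in>S. dist a b \<le> e"
  shows "asdim_le S 0"
  unfolding asdim_le_def
  by (rule allI, rule impI, rule exI[of _ e], rule exI[of _ "\<lambda>_. {S}"]) (use assms in auto)

lemma bounded_diam_bound:
  assumes "bounded S"
  shows "\<exists>e. \<forall>a\<in>S. \<forall>b\<in>S. dist a b \<le> e"
proof -
  obtain x e where "\<forall>y\<in>S. dist x y \<le> e" using assms unfolding bounded_def by blast
  then have "\<forall>a\<in>S. \<forall>b\<in>S. dist a b \<le> 2*e"
  proof (intro ballI)
    fix a b assume "\<forall>y\<in>S. dist x y \<le> e" "a \<in> S" "b \<in> S"
    then have "dist x a \<le> e" "dist x b \<le> e" by auto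
    moreover have "dist a b \<le> dist x a + dist x b" by (rule dist_triangle3)
    ultimately show "dist a b \<le> 2*e" by linarith
  qed
  then show ?thesis by blast
qed

lemma diam_bound_bounded:
  assumes "\<forall>a\<in>S. \<forall>b\<in>S. dist a b \<le> e"
  shows "bounded S"
proof (cases "S = {}")
  case True then show ?thesis by simp
next
  case False
  then obtain x where "x \<in> S" by blast
  then have "\<forall>y\<in>S. dist x y \<le> e" using assms by simp
  then show ?thesis unfolding bounded_def by (intro exI)
qed

lemma asdim_le_of_asdim:
  assumes "asdim S \<le> enat n"
  shows "asdim_le S n"
proof -
  have ex: "\<exists>n. asdim_le S n"
  proof (rule ccontr)
    assume "\<not> (\<exists>n. asdim_le S n)"
    then have "asdim S = \<infinity>" unfolding asdim_def by (simp only: if_False)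
    then show False using assms by simp
  qed
  then have "asdim S = enat (LEAST n. asdim_le S n)" unfolding asdim_def by (simp only: if_True)
  then have "enat (LEAST n. asdim_le S n) \<le> enat n" using assms by (simp only:)
  then have "(LEAST n. asdim_le S n) \<le> n" by (simp only: enat_ord_simps)
  moreover have "asdim_le S (LEAST n. asdim_le S n)" using ex by (rule LeastI_ex)
  ultimately show ?thesis using asdim_le_mono by blast
qed

lemma asdim_of_asdim_le:
  assumes "asdim_le S n"
  shows "asdim S \<le> enat n"
proof -
  have ex: "\<exists>n. asdim_le S n" using assms by blast
  have "asdim S = enat (LEAST n. asdim_le S n)" using ex unfolding asdim_def by (simp only: if_True)
  moreover have "(LEAST n. asdim_le S n) \<le> n" using assms by (rule Least_le)
  ultimately show ?thesis by (simp only: enat_ord_simps)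
qed

lemma asdim_zero: "asdim_le S 0 \<Longrightarrow> asdim S = 0"
proof -
  assume "asdim_le S 0"
  then have "asdim S \<le> enat 0" by (rule asdim_of_asdim_le)
  then have "asdim S \<le> 0" by (simp only: zero_enat_def)
  then show "asdim S = 0" by (simp only: ile0_eq)
qed

lemma asdim_fun_use:
  assumes "asdim_fun X f = enat n" "A \<subseteq> X" "asdim_le (f ` A) 0"
  shows "asdim_le A n"
proof -
  have "asdim A \<in> {asdim A | A. A \<subseteq> X \<and> asdim (f ` A) = 0}"
    using assms(2,3) asdim_zero by blast
  then have "asdim A \<le> asdim_fun X f" unfolding asdim_fun_def by (rule Sup_upper)
  then show ?thesis using assms(1) asdim_le_of_asdim by simp
qed


lemma kolmogorov:
  fixes S :: "'a::metric_space set" and C :: "nat \<Rightarrow> 'a set set"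
  assumes eps: "\<epsilon> > 0"
    and sub: "\<forall>i\<le>d. \<forall>A\<in>C i. A \<subseteq> S"
    and cov: "(\<Union>i\<le>d. \<Union>(C i)) = S"
    and disj: "\<forall>i\<le>d. \<forall>A\<in>C i. \<forall>B\<in>C i. A \<noteq> B \<longrightarrow> (\<forall>a\<in>A. \<forall>b\<in>B. dist a b \<ge> (4*real k+4)*\<epsilon>)"
    and bnd: "\<forall>i\<le>d. \<forall>A\<in>C i. \<forall>a\<in>A. \<forall>b\<in>A. dist a b \<le> \<beta>"
  shows "\<exists>G::nat \<Rightarrow> 'a set set. (\<forall>l\<le>k. \<forall>A\<in>G l. A \<subseteq> S) \<and>
     (\<forall>l\<le>k. \<forall>A\<in>G l. \<forall>B\<in>G l. A \<noteq> B \<longrightarrow> (\<forall>a\<in>A. \<forall>b\<in>B. dist a b \<ge> \<epsilon>)) \<and>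
     (\<forall>l\<le>k. \<forall>A\<in>G l. \<forall>a\<in>A. \<forall>b\<in>A. dist a b \<le> \<beta> + (4*real k+4)*\<epsilon>) \<and>
     (\<forall>x\<in>S. k + 1 - d \<le> card {l\<in>{..k}. x \<in> \<Union>(G l)})"
proof -
  define AA where "AA = (\<Union>i\<le>d. C i)"
  define \<tau> where "\<tau> l = (2*real l+2)*\<epsilon>" for l :: nat
  define near where "near x t = {U\<in>AA. \<exists>u\<in>U. dist x u < t}" for x :: 'a and t :: real
  define stable where "stable x l \<longleftrightarrow> near x (\<tau> l - \<epsilon>) = near x (\<tau> l)" for x l
  define mem where "mem l x = {z\<in>S. stable z l \<and> near z (\<tau> l) = near x (\<tau> l)}" for l x
  define G where "G l = mem l ` {x\<in>S. stable x l}" for l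
  have tau_le: "\<tau> l \<le> (2*real k+2)*\<epsilon>" if "l \<le> k" for l
    unfolding \<tau>_def using that eps by (intro mult_right_mono) auto
  have tau_pos: "\<tau> l - \<epsilon> > 0" for l
    unfolding \<tau>_def using eps by (simp add: algebra_simps) (smt (verit) eps of_nat_0_le_iff mult_nonneg_nonneg)
  have own: "\<exists>c\<le>d. \<exists>U\<in>C c. x \<in> U" if "x \<in> S" for x
    using that cov by blast
  have sep: "U = U'" if "c \<le> d" "U \<in> C c" "U' \<in> C c" "u \<in> U" "u' \<in> U'"
    "dist x u < (2*real k+2)*\<epsilon>" "dist x u' < (2*real k+2)*\<epsilon>" for c U U' u u' x
  proof (rule ccontr)
    assume "U \<noteq> U'"
    then have "dist u u' \<ge> (4*real k+4)*\<epsilon>" using disj that by blast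
    moreover have "dist u u' \<le> dist x u + dist x u'" by (rule dist_triangle3)
    ultimately show False using that(6,7) by (simp add: algebra_simps)
  qed
  have near_mono: "near x s \<subseteq> near x t" if "s \<le> t" for x s t
    unfolding near_def using that by force
  have P1: "\<forall>l\<le>k. \<forall>A\<in>G l. A \<subseteq> S" unfolding G_def mem_def by auto
  have P2: "\<forall>l\<le>k. \<forall>A\<in>G l. \<forall>B\<in>G l. A \<noteq> B \<longrightarrow> (\<forall>a\<in>A. \<forall>b\<in>B. dist a b \<ge> \<epsilon>)"
  proof (intro allI impI ballI)
    fix l A B a b assume l: "l \<le> k" and A: "A \<in> G l" and B: "B \<in> G l" and AB: "A \<noteq> B"
      and a: "a \<in> A" and b: "b \<in> B"
    obtain x where x: "A = mem l x" using A unfolding G_def by blast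
    obtain y where y: "B = mem l y" using B unfolding G_def by blast
    have sa: "stable a l" and na: "near a (\<tau> l) = near x (\<tau> l)" using a x unfolding mem_def by auto
    have sb: "stable b l" and nb: "near b (\<tau> l) = near y (\<tau> l)" using b y unfolding mem_def by auto
    have "near x (\<tau> l) \<noteq> near y (\<tau> l)"
    proof
      assume "near x (\<tau> l) = near y (\<tau> l)"
      then have "mem l x = mem l y" unfolding mem_def by simp
      then show False using AB x y by simp
    qed
    then have ne: "near a (\<tau> l) \<noteq> near b (\<tau> l)" using na nb by simp
    have key: "dist p q \<ge> \<epsilon>" if sp: "stable p l" and U1: "U \<in> near p (\<tau> l)" and U2: "U \<notin> near q (\<tau> l)" for p q U
    proof -
      have "U \<in> near p (\<tau> l - \<epsilon>)" using sp U1 unfolding stable_def by simp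
      then obtain u where u: "u \<in> U" "dist p u < \<tau> l - \<epsilon>" and UA: "U \<in> AA" unfolding near_def by blast
      have "dist q u \<ge> \<tau> l" using U2 UA u(1) unfolding near_def by force
      moreover have "dist q u \<le> dist p q + dist p u" by (rule dist_triangle3)
      ultimately show ?thesis using u(2) by linarith
    qed
    obtain U where "(U \<in> near a (\<tau> l) \<and> U \<notin> near b (\<tau> l)) \<or> (U \<in> near b (\<tau> l) \<and> U \<notin> near a (\<tau> l))"
      using ne by blast
    then show "dist a b \<ge> \<epsilon>"
    proof
      assume "U \<in> near a (\<tau> l) \<and> U \<notin> near b (\<tau> l)"
      then show ?thesis using key[OF sa] by blast
    next
      assume "U \<in> near b (\<tau> l) \<and> U \<notin> near a (\<tau> l)"
      then have "dist b a \<ge> \<epsilon>" using key[OF sb] by blast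
      then show ?thesis by (simp add: dist_commute)
    qed
  qed
  have P3: "\<forall>l\<le>k. \<forall>A\<in>G l. \<forall>a\<in>A. \<forall>b\<in>A. dist a b \<le> \<beta> + (4*real k+4)*\<epsilon>"
  proof (intro allI impI ballI)
    fix l A a b assume l: "l \<le> k" and A: "A \<in> G l" and a: "a \<in> A" and b: "b \<in> A"
    obtain x where x: "A = mem l x" "x \<in> S" using A unfolding G_def by blast
    obtain c U0 where c: "c \<le> d" "U0 \<in> C c" "x \<in> U0" using own[OF x(2)] by blast
    have U0A: "U0 \<in> AA" unfolding AA_def using c by blast
    have "0 < \<tau> l" using tau_pos[of l] eps by linarith
    then have "U0 \<in> near x (\<tau> l)" unfolding near_def using U0A c(3) by force
    then have "U0 \<in> near a (\<tau> l)" "U0 \<in> near b (\<tau> l)" using a b x unfolding mem_def by auto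
    then obtain u u' where u: "u \<in> U0" "dist a u < \<tau> l" and u': "u' \<in> U0" "dist b u' < \<tau> l"
      unfolding near_def by blast
    have "dist u u' \<le> \<beta>" using bnd c u(1) u'(1) by blast
    moreover have "dist a b \<le> dist a u + dist u u' + dist u' b"
      using dist_triangle[of a b u] dist_triangle[of u b u'] by linarith
    moreover have "\<tau> l \<le> (2*real k+2)*\<epsilon>" using tau_le l by blast
    moreover have "dist u' b = dist b u'" by (simp add: dist_commute)
    ultimately show "dist a b \<le> \<beta> + (4*real k+4)*\<epsilon>" using u(2) u'(2) by (simp add: algebra_simps)
  qed
  have P4: "\<forall>x\<in>S. k + 1 - d \<le> card {l\<in>{..k}. x \<in> \<Union>(G l)}"
  proof
    fix x assume xS: "x \<in> S"
    obtain c0 U0 where c0: "c0 \<le> d" "U0 \<in> C c0" "x \<in> U0" using own[OF xS] by blast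
    have U0A: "U0 \<in> AA" unfolding AA_def using c0 by blast
    define Uns where "Uns = {l\<in>{..k}. \<not> stable x l}"
    define St where "St = {l\<in>{..k}. stable x l}"
    have St_sub: "St \<subseteq> {l\<in>{..k}. x \<in> \<Union>(G l)}"
    proof
      fix l assume "l \<in> St"
      then have "x \<in> mem l x" "mem l x \<in> G l" "l \<in> {..k}" using xS unfolding St_def mem_def G_def by auto
      then show "l \<in> {l\<in>{..k}. x \<in> \<Union>(G l)}" by blast
    qed
    have wit_ex: "\<exists>U. U \<in> near x (\<tau> l) \<and> U \<notin> near x (\<tau> l - \<epsilon>)" if "l \<in> Uns" for l
    proof -
      have "near x (\<tau> l - \<epsilon>) \<subseteq> near x (\<tau> l)" using eps by (intro near_mono) simp
      moreover have "near x (\<tau> l - \<epsilon>) \<noteq> near x (\<tau> l)" using that unfolding Uns_def stable_def by simp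
      ultimately show ?thesis by blast
    qed
    define wit where "wit l = (SOME U. U \<in> near x (\<tau> l) \<and> U \<notin> near x (\<tau> l - \<epsilon>))" for l
    have wit: "wit l \<in> near x (\<tau> l) \<and> wit l \<notin> near x (\<tau> l - \<epsilon>)" if "l \<in> Uns" for l
      unfolding wit_def using someI_ex[OF wit_ex[OF that]] .
    define col where "col U = (SOME c. c \<le> d \<and> U \<in> C c)" for U
    have col: "col U \<le> d \<and> U \<in> C (col U)" if "U \<in> AA" for U
    proof -
      have "\<exists>c. c \<le> d \<and> U \<in> C c" using that unfolding AA_def by blast
      then show ?thesis unfolding col_def by (rule someI_ex)
    qed
    have witA: "wit l \<in> AA" and witu: "\<exists>u\<in>wit l. dist x u < (2*real k+2)*\<epsilon>" if "l \<in> Uns" for l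
    proof -
      have "wit l \<in> near x (\<tau> l)" using wit[OF that] by blast
      moreover have "\<tau> l \<le> (2*real k+2)*\<epsilon>" using that tau_le unfolding Uns_def by auto
      ultimately show "wit l \<in> AA" "\<exists>u\<in>wit l. dist x u < (2*real k+2)*\<epsilon>" unfolding near_def by force+
    qed
    have U0near: "\<exists>u\<in>U0. dist x u < (2*real k+2)*\<epsilon>"
      using c0(3) eps by (intro bexI[of _ x]) (auto intro!: add_pos_nonneg mult_pos_pos)
    have inj: "inj_on (\<lambda>l. col (wit l)) Uns"
    proof (rule inj_onI)
      fix l1 l2 assume l1: "l1 \<in> Uns" and l2: "l2 \<in> Uns" and eq: "col (wit l1) = col (wit l2)"
      have "wit l1 = wit l2"
      proof -
        obtain u1 where "u1 \<in> wit l1" "dist x u1 < (2*real k+2)*\<epsilon>" using witu[OF l1] by blast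
        moreover obtain u2 where "u2 \<in> wit l2" "dist x u2 < (2*real k+2)*\<epsilon>" using witu[OF l2] by blast
        moreover have "col (wit l1) \<le> d" "wit l1 \<in> C (col (wit l1))" using col[OF witA[OF l1]] by auto
        moreover have "wit l2 \<in> C (col (wit l1))" using col[OF witA[OF l2]] eq by auto
        ultimately show ?thesis using sep by blast
      qed
      then have W: "wit l1 \<in> near x (\<tau> l1)" "wit l1 \<notin> near x (\<tau> l1 - \<epsilon>)"
        "wit l1 \<in> near x (\<tau> l2)" "wit l1 \<notin> near x (\<tau> l2 - \<epsilon>)" using wit[OF l1] wit[OF l2] by auto
      have no: False if "i < j" "wit l1 \<in> near x (\<tau> i)" "wit l1 \<notin> near x (\<tau> j - \<epsilon>)" for i j
      proof -
        have "real i + 1 \<le> real j" using that(1) by simp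
        then have "(2*real i+2)*\<epsilon> \<le> (2*real j+1)*\<epsilon>" using eps by (intro mult_right_mono) auto
        then have "\<tau> i \<le> \<tau> j - \<epsilon>" unfolding \<tau>_def by (simp add: algebra_simps)
        then show False using that(2,3) near_mono by blast
      qed
      show "l1 = l2"
      proof (rule ccontr)
        assume "l1 \<noteq> l2"
        then have "l1 < l2 \<or> l2 < l1" by arith
        then show False using no W by blast
      qed
    qed
    have img: "(\<lambda>l. col (wit l)) ` Uns \<subseteq> {..d} - {c0}"
    proof
      fix c assume "c \<in> (\<lambda>l. col (wit l)) ` Uns"
      then obtain l where l: "l \<in> Uns" "c = col (wit l)" by blast
      have cd: "c \<le> d" "wit l \<in> C c" using col[OF witA[OF l(1)]] l(2) by auto
      have "c \<noteq> c0"
      proof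
        assume "c = c0"
        then have "wit l = U0" using sep[of c0 "wit l" U0] cd c0 witu[OF l(1)] U0near by blast
        then have "U0 \<notin> near x (\<tau> l - \<epsilon>)" using wit[OF l(1)] by simp
        moreover have "U0 \<in> near x (\<tau> l - \<epsilon>)" unfolding near_def using U0A c0(3) tau_pos[of l] by force
        ultimately show False by simp
      qed
      then show "c \<in> {..d} - {c0}" using cd by simp
    qed
    have "card Uns = card ((\<lambda>l. col (wit l)) ` Uns)" using inj by (simp add: card_image)
    also have "\<dots> \<le> card ({..d} - {c0})" using img by (intro card_mono) auto
    also have "\<dots> = d" using c0(1) by simp
    finally have cU: "card Uns \<le> d" .
    have "St \<union> Uns = {..k}" "St \<inter> Uns = {}" unfolding St_def Uns_def by auto
    then have "card St + card Uns = Suc k"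
      by (metis card_Un_disjoint card_atMost finite_Un finite_atMost)
    then have "k + 1 - d \<le> card St" using cU by linarith
    also have "\<dots> \<le> card {l\<in>{..k}. x \<in> \<Union>(G l)}" using St_sub by (intro card_mono) auto
    finally show "k + 1 - d \<le> card {l\<in>{..k}. x \<in> \<Union>(G l)}" .
  qed
  show ?thesis using P1 P2 P3 P4 by blast
qed


definition part1 :: "'a::metric_space set \<Rightarrow> real \<Rightarrow> real \<Rightarrow> bool" where
  "part1 S r g \<longleftrightarrow> (\<exists>FF. (\<forall>A\<in>FF. A \<subseteq> S) \<and> \<Union>FF = S \<and>
     (\<forall>A\<in>FF. \<forall>B\<in>FF. A \<noteq> B \<longrightarrow> (\<forall>a\<in>A. \<forall>b\<in>B. dist a b \<ge> r)) \<and>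
     (\<forall>A\<in>FF. \<forall>a\<in>A. \<forall>b\<in>A. dist a b \<le> g))"

lemma part1E:
  assumes "part1 S r g"
  obtains FF where "\<forall>A\<in>FF. A \<subseteq> S" "\<Union>FF = S"
     "\<forall>A\<in>FF. \<forall>B\<in>FF. A \<noteq> B \<longrightarrow> (\<forall>a\<in>A. \<forall>b\<in>B. dist a b \<ge> r)"
     "\<forall>A\<in>FF. \<forall>a\<in>A. \<forall>b\<in>A. dist a b \<le> g"
  using assms unfolding part1_def by (elim exE conjE) (rule that)

lemma part1I:
  assumes "\<forall>A\<in>FF. A \<subseteq> S" "\<Union>FF = S"
     "\<forall>A\<in>FF. \<forall>B\<in>FF. A \<noteq> B \<longrightarrow> (\<forall>a\<in>A. \<forall>b\<in>B. dist a b \<ge> r)"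
     "\<forall>A\<in>FF. \<forall>a\<in>A. \<forall>b\<in>A. dist a b \<le> g"
  shows "part1 S r g"
  unfolding part1_def using assms by (intro exI conjI)

lemma part1_empty: "part1 {} r g"
  by (rule part1I[of "{}"]) auto

lemma saturate:
  fixes S :: "'a::metric_space set"
  assumes pS: "part1 S r g" and r: "r > 0" and g: "g \<ge> 0" and K: "K \<ge> 0" and rho: "\<rho> > 2*r + g"
    and Qdisj: "\<forall>Q1\<in>QQ. \<forall>Q2\<in>QQ. Q1 \<noteq> Q2 \<longrightarrow> (\<forall>p\<in>Q1. \<forall>q\<in>Q2. dist p q \<ge> \<rho>)"
    and Qbnd: "\<forall>Q\<in>QQ. \<forall>p\<in>Q. \<forall>q\<in>Q. dist p q \<le> K"
  shows "part1 (S \<union> \<Union>QQ) r (K + 2*r + 2*g)"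
proof -
  obtain FF where H1: "\<forall>A\<in>FF. A \<subseteq> S" and H2: "\<Union>FF = S"
     and H3: "\<forall>A\<in>FF. \<forall>B\<in>FF. A \<noteq> B \<longrightarrow> (\<forall>a\<in>A. \<forall>b\<in>B. dist a b \<ge> r)"
     and H4: "\<forall>A\<in>FF. \<forall>a\<in>A. \<forall>b\<in>A. dist a b \<le> g"
    using pS by (rule part1E)
  define near where "near Bk Q \<longleftrightarrow> (\<exists>p\<in>Bk. \<exists>q\<in>Q. dist p q < r)" for Bk Q :: "'a set"
  define sat where "sat Q = Q \<union> \<Union>{Bk\<in>FF. near Bk Q}" for Q
  define NF where "NF = sat ` QQ \<union> {Bk\<in>FF. \<forall>Q\<in>QQ. \<not> near Bk Q}"
  have Oeq: "Bk1 = Bk2" if "Bk1 \<in> FF" "Bk2 \<in> FF" "p \<in> Bk1" "q \<in> Bk2" "dist p q < r" for Bk1 Bk2 p q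
    using H3 that by force
  have Qeq: "Q1 = Q2" if "Q1 \<in> QQ" "Q2 \<in> QQ" "p \<in> Q1" "q \<in> Q2" "dist p q < r" for Q1 Q2 p q
  proof (rule ccontr)
    assume "Q1 \<noteq> Q2"
    then have "dist p q \<ge> \<rho>" using Qdisj that by blast
    then show False using that(5) rho g r by linarith
  qed
  have uniq: "Q1 = Q2" if U: "Bk \<in> FF" "Q1 \<in> QQ" "Q2 \<in> QQ" "near Bk Q1" "near Bk Q2" for Bk Q1 Q2
  proof (rule ccontr)
    assume ne: "Q1 \<noteq> Q2"
    obtain p1 q1 where 1: "p1 \<in> Bk" "q1 \<in> Q1" "dist p1 q1 < r" using U(4) unfolding near_def by blast
    obtain p2 q2 where 2: "p2 \<in> Bk" "q2 \<in> Q2" "dist p2 q2 < r" using U(5) unfolding near_def by blast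
    have "dist p1 p2 \<le> g" using H4 U(1) 1 2 by blast
    moreover have "dist q1 q2 \<ge> \<rho>" using Qdisj ne U(2,3) 1 2 by blast
    moreover have "dist q1 q2 \<le> dist q1 p1 + dist p1 p2 + dist p2 q2"
      using dist_triangle[of q1 q2 p1] dist_triangle[of p1 q2 p2] by linarith
    ultimately show False using 1 2 rho by (simp add: dist_commute)
  qed
  have satE: "p \<in> Q \<or> (\<exists>Bk\<in>FF. near Bk Q \<and> p \<in> Bk)" if "p \<in> sat Q" for p Q
    using that unfolding sat_def by blast
  have close: "p \<in> sat Q \<Longrightarrow> Q \<in> QQ \<Longrightarrow> \<exists>q\<in>Q. dist p q \<le> g + r" for p Q
  proof -
    assume p: "p \<in> sat Q" and Q: "Q \<in> QQ"
    show ?thesis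
    proof (cases "p \<in> Q")
      case True then show ?thesis using g r by (intro bexI[of _ p]) auto
    next
      case False
      then obtain Bk where Bk: "Bk \<in> FF" "near Bk Q" "p \<in> Bk" using satE[OF p] by blast
      then obtain p' q where pq: "p' \<in> Bk" "q \<in> Q" "dist p' q < r" unfolding near_def by blast
      have "dist p p' \<le> g" using H4 Bk(1) Bk(3) pq(1) by blast
      then have "dist p q \<le> g + r" using dist_triangle[of p q p'] pq(3) by linarith
      then show ?thesis using pq(2) by blast
    qed
  qed
  have main: "M1 = M2" if M1: "M1 \<in> NF" and M2: "M2 \<in> NF" and p: "p \<in> M1" and q: "q \<in> M2"
    and d: "dist p q < r" for M1 M2 p q
  proof -
    have d': "dist q p < r" using d by (simp add: dist_commute)
    have nearI: "near Bk Q" if "p' \<in> Bk" "q' \<in> Q" "dist p' q' < r" for Bk Q p' q'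
      unfolding near_def using that by blast
    consider (SS) Q1 Q2 where "Q1 \<in> QQ" "M1 = sat Q1" "Q2 \<in> QQ" "M2 = sat Q2"
      | (SL) Q1 where "Q1 \<in> QQ" "M1 = sat Q1" "M2 \<in> FF" "\<forall>Q\<in>QQ. \<not> near M2 Q"
      | (LS) Q2 where "Q2 \<in> QQ" "M2 = sat Q2" "M1 \<in> FF" "\<forall>Q\<in>QQ. \<not> near M1 Q"
      | (LL) "M1 \<in> FF" "\<forall>Q\<in>QQ. \<not> near M1 Q" "M2 \<in> FF" "\<forall>Q\<in>QQ. \<not> near M2 Q"
      using M1 M2 unfolding NF_def by blast
    then show ?thesis
    proof cases
      case SS
      have "Q1 = Q2"
      proof (cases "p \<in> Q1")
        case pQ: True
        show ?thesis
        proof (cases "q \<in> Q2")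
          case True then show ?thesis using Qeq SS pQ d by blast
        next
          case False
          then obtain Bk2 where "Bk2 \<in> FF" "near Bk2 Q2" "q \<in> Bk2" using satE[of q Q2] q SS by blast
          moreover then have "near Bk2 Q1" using nearI[OF _ pQ d'] by blast
          ultimately show ?thesis using uniq SS by blast
        qed
      next
        case pQ: False
        then obtain Bk1 where Bk1: "Bk1 \<in> FF" "near Bk1 Q1" "p \<in> Bk1" using satE[of p Q1] p SS by blast
        show ?thesis
        proof (cases "q \<in> Q2")
          case True
          then have "near Bk1 Q2" using nearI[OF Bk1(3) _ d] by blast
          then show ?thesis using uniq SS Bk1 by blast
        next
          case False
          then obtain Bk2 where Bk2: "Bk2 \<in> FF" "near Bk2 Q2" "q \<in> Bk2" using satE[of q Q2] q SS by blast
          have "Bk1 = Bk2" using Oeq Bk1 Bk2 d by blast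
          then show ?thesis using uniq SS Bk1 Bk2 by blast
        qed
      qed
      then show ?thesis using SS by simp
    next
      case SL
      have False
      proof (cases "p \<in> Q1")
        case True
        then have "near M2 Q1" using nearI[OF q _ d'] by blast
        then show False using SL by blast
      next
        case False
        then obtain Bk1 where Bk1: "Bk1 \<in> FF" "near Bk1 Q1" "p \<in> Bk1" using satE[of p Q1] p SL by blast
        have "Bk1 = M2" using Oeq Bk1 SL q d by blast
        then show False using SL Bk1 by blast
      qed
      then show ?thesis ..
    next
      case LS
      have False
      proof (cases "q \<in> Q2")
        case True
        then have "near M1 Q2" using nearI[OF p _ d] by blast
        then show False using LS by blast
      next
        case False
        then obtain Bk2 where Bk2: "Bk2 \<in> FF" "near Bk2 Q2" "q \<in> Bk2" using satE[of q Q2] q LS by blast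
        have "M1 = Bk2" using Oeq Bk2 LS p d by blast
        then show False using LS Bk2 by blast
      qed
      then show ?thesis ..
    next
      case LL
      then show ?thesis using Oeq p q d by blast
    qed
  qed
  have P1: "\<forall>A\<in>NF. A \<subseteq> S \<union> \<Union>QQ"
    unfolding NF_def sat_def using H1 by blast
  have P2: "\<Union>NF = S \<union> \<Union>QQ"
  proof (rule equalityI)
    show "\<Union>NF \<subseteq> S \<union> \<Union>QQ" using P1 by blast
    show "S \<union> \<Union>QQ \<subseteq> \<Union>NF"
    proof
      fix x assume "x \<in> S \<union> \<Union>QQ"
      then consider "x \<in> S" | "x \<in> \<Union>QQ" by blast
      then show "x \<in> \<Union>NF"
      proof cases
        case 1
        then obtain Bk where Bk: "Bk \<in> FF" "x \<in> Bk" using H2 by blast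
        show ?thesis
        proof (cases "\<exists>Q\<in>QQ. near Bk Q")
          case True
          then obtain Q where "Q \<in> QQ" "near Bk Q" by blast
          then have "x \<in> sat Q" "sat Q \<in> NF" unfolding sat_def NF_def using Bk by blast+
          then show ?thesis by blast
        next
          case False
          then have "Bk \<in> NF" unfolding NF_def using Bk by blast
          then show ?thesis using Bk by blast
        qed
      next
        case 2
        then obtain Q where "Q \<in> QQ" "x \<in> Q" by blast
        then have "x \<in> sat Q" "sat Q \<in> NF" unfolding sat_def NF_def by blast+
        then show ?thesis by blast
      qed
    qed
  qed
  have P3: "\<forall>A\<in>NF. \<forall>B\<in>NF. A \<noteq> B \<longrightarrow> (\<forall>a\<in>A. \<forall>b\<in>B. dist a b \<ge> r)"
    using main by (meson not_less)
  have P4: "\<forall>A\<in>NF. \<forall>a\<in>A. \<forall>b\<in>A. dist a b \<le> K + 2*r + 2*g"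
  proof (intro ballI)
    fix A a b assume A: "A \<in> NF" and a: "a \<in> A" and b: "b \<in> A"
    show "dist a b \<le> K + 2*r + 2*g"
    proof (cases "A \<in> sat ` QQ")
      case True
      then obtain Q where Q: "Q \<in> QQ" "A = sat Q" by blast
      obtain qa where qa: "qa \<in> Q" "dist a qa \<le> g + r" using close a Q by blast
      obtain qb where qb: "qb \<in> Q" "dist b qb \<le> g + r" using close b Q by blast
      have "dist qa qb \<le> K" using Qbnd Q qa qb by blast
      moreover have "dist a b \<le> dist a qa + dist qa qb + dist qb b"
        using dist_triangle[of a b qa] dist_triangle[of qa b qb] by linarith
      ultimately show ?thesis using qa qb by (simp add: dist_commute)
    next
      case False
      then have "A \<in> FF" using A unfolding NF_def by blast
      then have "dist a b \<le> g" using H4 a b by blast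
      then show ?thesis using K r g by linarith
    qed
  qed
  show ?thesis using P1 P2 P3 P4 by (rule part1I)
qed



lemma fiber_bounded:
  fixes X :: "'a::metric_space set" and f :: "'a \<Rightarrow> 'b::metric_space"
  assumes hfun: "asdim_fun X f = enat n" and rho: "\<rho> > 0" and K: "bounded K"
    and VV: "\<forall>V\<in>VV. \<forall>p\<in>V. \<forall>q\<in>V. dist p q \<le> D1"
  shows "\<exists>\<beta>. \<forall>V\<in>VV. V \<inter> K \<noteq> {} \<longrightarrow> colorable {x\<in>X. f x \<in> V} n \<rho> \<beta>"
proof -
  define K' where "K' = {y. \<exists>z\<in>K. dist y z \<le> D1}"
  obtain c e where ce: "\<forall>y\<in>K. dist c y \<le> e" using K unfolding bounded_def by blast
  have "\<forall>y\<in>K'. dist c y \<le> e + D1"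
  proof
    fix y assume "y \<in> K'"
    then obtain z where "z \<in> K" "dist y z \<le> D1" unfolding K'_def by blast
    moreover have "dist c y \<le> dist c z + dist z y" by (rule dist_triangle)
    moreover have "dist z y = dist y z" by (rule dist_commute)
    ultimately show "dist c y \<le> e + D1" using ce by fastforce
  qed
  then have "bounded K'" unfolding bounded_def by blast
  then obtain e' where e': "\<forall>a\<in>K'. \<forall>b\<in>K'. dist a b \<le> e'" using bounded_diam_bound by blast
  define A where "A = {x\<in>X. f x \<in> K'}"
  have "f ` A \<subseteq> K'" unfolding A_def by blast
  then have "\<forall>a\<in>f ` A. \<forall>b\<in>f ` A. dist a b \<le> e'" using e' by blast
  then have "asdim_le (f ` A) 0" by (rule asdim_le_bounded0)
  moreover have AX: "A \<subseteq> X" unfolding A_def by blast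
  ultimately have "asdim_le A n" using asdim_fun_use[OF hfun] by blast
  then obtain \<beta> where \<beta>: "colorable A n \<rho> \<beta>" using rho unfolding asdim_le_colorable by blast
  have "colorable {x\<in>X. f x \<in> V} n \<rho> \<beta>" if V: "V \<in> VV" "V \<inter> K \<noteq> {}" for V
  proof -
    obtain z where z: "z \<in> V" "z \<in> K" using V(2) by blast
    have "V \<subseteq> K'" unfolding K'_def using VV V(1) z by blast
    then have "{x\<in>X. f x \<in> V} \<subseteq> A" unfolding A_def by blast
    then show ?thesis by (rule colorable_subset[OF \<beta>])
  qed
  then show ?thesis by blast
qed

lemma fiber_lemma:
  fixes X :: "'a::metric_space set" and f :: "'a \<Rightarrow> 'b::metric_space"
  assumes hfun: "asdim_fun X f = enat n" and rho: "\<rho> > 0"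
    and VV: "\<forall>V\<in>VV. \<forall>p\<in>V. \<forall>q\<in>V. dist p q \<le> D1"
  shows "\<exists>\<beta>. \<forall>V\<in>VV. colorable {x\<in>X. f x \<in> V} n \<rho> \<beta>"
proof (rule ccontr)
  define P where "P V = {x\<in>X. f x \<in> V}" for V
  assume "\<not> (\<exists>\<beta>. \<forall>V\<in>VV. colorable {x\<in>X. f x \<in> V} n \<rho> \<beta>)"
  then have H: "\<forall>\<beta>. \<exists>V\<in>VV. \<not> colorable (P V) n \<rho> \<beta>" unfolding P_def by blast
  have Vb: "bounded V" if "V \<in> VV" for V
    using VV that diam_bound_bounded by blast
  define Prop where "Prop Acc s V \<longleftrightarrow> V \<in> VV \<and> \<not> colorable (P V) n \<rho> (real s) \<and> (\<forall>y\<in>V. \<forall>z\<in>Acc. dist y z \<ge> real s)"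
    for Acc s V
  have g_ex: "\<exists>V. Prop Acc s V" if bA: "bounded Acc" for Acc s
  proof -
    define K where "K = {y. \<exists>z\<in>Acc. dist y z < real s}"
    obtain c e where ce: "\<forall>y\<in>Acc. dist c y \<le> e" using bA unfolding bounded_def by blast
    have "\<forall>y\<in>K. dist c y \<le> e + real s"
    proof
      fix y assume "y \<in> K"
      then obtain z where "z \<in> Acc" "dist y z < real s" unfolding K_def by blast
      moreover have "dist c y \<le> dist c z + dist z y" by (rule dist_triangle)
    moreover have "dist z y = dist y z" by (rule dist_commute)
    ultimately show "dist c y \<le> e + real s" using ce by fastforce
    qed
    then have "bounded K" unfolding bounded_def by blast
    then obtain \<beta>0 where \<beta>0: "\<forall>V\<in>VV. V \<inter> K \<noteq> {} \<longrightarrow> colorable (P V) n \<rho> \<beta>0"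
      using fiber_bounded[OF hfun rho _ VV] unfolding P_def by blast
    obtain V where V: "V \<in> VV" "\<not> colorable (P V) n \<rho> (max \<beta>0 (real s))" using H by blast
    have n0: "\<not> colorable (P V) n \<rho> \<beta>0" using V(2) colorable_mono_bound[of "P V" n \<rho> \<beta>0 "max \<beta>0 (real s)"] by auto
    have ns: "\<not> colorable (P V) n \<rho> (real s)" using V(2) colorable_mono_bound[of "P V" n \<rho> "real s" "max \<beta>0 (real s)"] by auto
    have "V \<inter> K = {}" using n0 \<beta>0 V(1) by blast
    then have "\<forall>y\<in>V. \<forall>z\<in>Acc. dist y z \<ge> real s" unfolding K_def by force
    then show ?thesis unfolding Prop_def using V(1) ns by blast
  qed
  define g where "g Acc s = (SOME V. Prop Acc s V)" for Acc s
  have g: "Prop Acc s (g Acc s)" if "bounded Acc" for Acc s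
    unfolding g_def using someI_ex[OF g_ex[OF that]] .
  define acc where "acc = rec_nat {} (\<lambda>s A. A \<union> g A s)"
  have acc0: "acc 0 = {}" and accS: "acc (Suc s) = acc s \<union> g (acc s) s" for s
    unfolding acc_def by simp_all
  have accb: "bounded (acc s)" for s
  proof (induction s)
    case 0 then show ?case using acc0 by simp
  next
    case (Suc s)
    have "g (acc s) s \<in> VV" using g[OF Suc] unfolding Prop_def by blast
    then show ?case using accS Suc Vb by simp
  qed
  define Vs where "Vs s = g (acc s) s" for s
  have Vs: "Vs s \<in> VV" "\<not> colorable (P (Vs s)) n \<rho> (real s)" "\<forall>y\<in>Vs s. \<forall>z\<in>acc s. dist y z \<ge> real s" for s
    using g[OF accb[of s]] unfolding Prop_def Vs_def by blast+
  have acc_eq: "acc s = (\<Union>t<s. Vs t)" for s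
  proof (induction s)
    case 0 then show ?case using acc0 by simp
  next
    case (Suc s) then show ?case using accS unfolding Vs_def by (simp add: lessThan_Suc Un_commute)
  qed
  have acc_mono: "acc s \<subseteq> acc t" if "s \<le> t" for s t
    unfolding acc_eq using that by (intro UN_mono) auto
  define B where "B = (\<Union>s. Vs s)"
  have B0: "asdim_le B 0"
    unfolding asdim_le_colorable
  proof (intro allI impI)
    fix r' :: real assume r': "r' > 0"
    define s0 where "s0 = nat \<lceil>r'\<rceil>"
    have s0r: "real s0 \<ge> r'" unfolding s0_def by linarith
    define fam where "fam = insert (acc s0) (Vs ` {s0..})"
    obtain e0 where e0: "\<forall>a\<in>acc s0. \<forall>b\<in>acc s0. dist a b \<le> e0" using bounded_diam_bound accb by blast
    have accB: "acc s0 \<subseteq> B" unfolding acc_eq B_def by blast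
    have VsB: "Vs s \<subseteq> B" for s unfolding B_def by blast
    have F1: "\<forall>i\<le>(0::nat). \<forall>A\<in>(\<lambda>_. fam) i. A \<subseteq> B"
    proof (intro allI impI ballI)
      fix i A assume "A \<in> fam"
      then consider "A = acc s0" | s where "A = Vs s" unfolding fam_def by blast
      then show "A \<subseteq> B" using accB VsB by cases auto
    qed
    have F2: "(\<Union>i\<le>(0::nat). \<Union>((\<lambda>_. fam) i)) = B"
    proof (rule equalityI)
      show "(\<Union>i\<le>(0::nat). \<Union>((\<lambda>_. fam) i)) \<subseteq> B" using F1 by auto
      show "B \<subseteq> (\<Union>i\<le>(0::nat). \<Union>((\<lambda>_. fam) i))"
      proof
        fix y assume "y \<in> B"
        then obtain s where s: "y \<in> Vs s" unfolding B_def by blast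
        show "y \<in> (\<Union>i\<le>(0::nat). \<Union>((\<lambda>_. fam) i))"
        proof (cases "s < s0")
          case True
          then have "y \<in> acc s0" using s unfolding acc_eq by blast
          moreover have "acc s0 \<in> fam" unfolding fam_def by simp
          ultimately have "y \<in> \<Union>fam" by (rule UnionI[rotated])
          then show ?thesis by (intro UN_I[of "0::nat"]) simp_all
        next
          case False
          then have "s \<in> {s0..}" by simp
          then have "Vs s \<in> fam" unfolding fam_def by (intro insertI2 imageI)
          then have "y \<in> \<Union>fam" using s by (rule UnionI)
          then show ?thesis by (intro UN_I[of "0::nat"]) simp_all
        qed
      qed
    qed
    have farV: "dist a b \<ge> r'" if "s0 \<le> s" "a \<in> acc s" "b \<in> Vs s" for a b s
    proof -
      have "dist b a \<ge> real s" using Vs(3) that by blast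
      moreover have "real s \<ge> real s0" using that(1) by simp
      ultimately show ?thesis using s0r by (simp add: dist_commute)
    qed
    have F3: "\<forall>i\<le>(0::nat). \<forall>A\<in>(\<lambda>_. fam) i. \<forall>Ba\<in>(\<lambda>_. fam) i. A \<noteq> Ba \<longrightarrow> (\<forall>a\<in>A. \<forall>b\<in>Ba. r' \<le> dist a b)"
    proof (intro allI impI ballI)
      fix i A Ba a b assume A: "A \<in> fam" and Ba: "Ba \<in> fam" and ne: "A \<noteq> Ba" and a: "a \<in> A" and b: "b \<in> Ba"
      consider (AA) "A = acc s0" "Ba = acc s0" | (AV) s where "A = acc s0" "Ba = Vs s" "s0 \<le> s"
        | (VA) s where "A = Vs s" "Ba = acc s0" "s0 \<le> s" | (CVV) s t where "A = Vs s" "Ba = Vs t" "s0 \<le> s" "s0 \<le> t"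
      proof -
        from A consider (a1) "A = acc s0" | (a2) s where "A = Vs s" "s0 \<le> s" unfolding fam_def by auto
        then show thesis
        proof cases
          case a1
          from Ba consider (b1) "Ba = acc s0" | (b2) t where "Ba = Vs t" "s0 \<le> t" unfolding fam_def by auto
          then show thesis
          proof cases
            case b1 then show thesis using a1 that(1) by blast
          next
            case (b2 t) then show thesis using a1 that(2) by blast
          qed
        next
          case (a2 s)
          from Ba consider (b1) "Ba = acc s0" | (b2) t where "Ba = Vs t" "s0 \<le> t" unfolding fam_def by auto
          then show thesis
          proof cases
            case b1 then show thesis using a2 that(3) by blast
          next
            case (b2 t) then show thesis using a2 that(4) by blast
          qed
        qed
      qed
      then show "r' \<le> dist a b"
      proof cases
        case AA then show ?thesis using ne by simp
      next
        case (AV s)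
        then show ?thesis using farV[of s a b] acc_mono[of s0 s] a b by blast
      next
        case (VA s)
        then have "r' \<le> dist b a" using farV[of s b a] acc_mono[of s0 s] a b by blast
        then show ?thesis by (simp add: dist_commute)
      next
        case (CVV s t)
        then have "s \<noteq> t" using ne by blast
        then consider "s < t" | "t < s" by arith
        then show ?thesis
        proof cases
          case 1
          then have "a \<in> acc t" using CVV a unfolding acc_eq by blast
          moreover have "b \<in> Vs t" using CVV b by simp
          ultimately show ?thesis using farV[of t a b] CVV(4) by blast
        next
          case 2
          then have "b \<in> acc s" using CVV b unfolding acc_eq by blast
          moreover have "a \<in> Vs s" using CVV a by simp
          ultimately have "r' \<le> dist b a" using farV[of s b a] CVV(3) by blast
          then show ?thesis by (simp add: dist_commute)
        qed
      qed
    qed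
    have F4: "\<forall>i\<le>(0::nat). \<forall>A\<in>(\<lambda>_. fam) i. \<forall>a\<in>A. \<forall>b\<in>A. dist a b \<le> max e0 D1"
    proof (intro allI impI ballI)
      fix i A a b assume A: "A \<in> fam" and a: "a \<in> A" and b: "b \<in> A"
      show "dist a b \<le> max e0 D1"
      proof (cases "A = acc s0")
        case True then show ?thesis using e0 a b by fastforce
      next
        case False
        then obtain s where "A = Vs s" using A unfolding fam_def by blast
        then have "dist a b \<le> D1" using VV Vs(1)[of s] a b by blast
        then show ?thesis by linarith
      qed
    qed
    show "\<exists>D. colorable B 0 r' D"
      using colorableI[OF F1 F2 F3 F4] by blast
  qed
  define A where "A = {x\<in>X. f x \<in> B}"
  have "f ` A \<subseteq> B" unfolding A_def by blast
  then have "asdim_le (f ` A) 0" using B0 asdim_le_subset by blast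
  moreover have AX: "A \<subseteq> X" unfolding A_def by blast
  ultimately have "asdim_le A n" using asdim_fun_use[OF hfun] by blast
  then obtain \<beta>A where \<beta>A: "colorable A n \<rho> \<beta>A" using rho unfolding asdim_le_colorable by blast
  define s where "s = nat \<lceil>\<beta>A\<rceil>"
  have sb: "\<beta>A \<le> real s" unfolding s_def by linarith
  have "P (Vs s) \<subseteq> A" unfolding P_def A_def B_def by blast
  then have "colorable (P (Vs s)) n \<rho> \<beta>A" using \<beta>A by (rule colorable_subset[rotated])
  then have "colorable (P (Vs s)) n \<rho> (real s)" using sb by (rule colorable_mono_bound)
  then show False using Vs(2) by blast
qed



definition kolm_prop :: "'a::metric_space set \<Rightarrow> nat \<Rightarrow> nat \<Rightarrow> real \<Rightarrow> real \<Rightarrow> (nat \<Rightarrow> 'a set set) \<Rightarrow> bool" where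
  "kolm_prop S k d \<rho> B G \<longleftrightarrow> (\<forall>l\<le>k. \<forall>A\<in>G l. A \<subseteq> S) \<and>
     (\<forall>l\<le>k. \<forall>A\<in>G l. \<forall>Ba\<in>G l. A \<noteq> Ba \<longrightarrow> (\<forall>a\<in>A. \<forall>b\<in>Ba. dist a b \<ge> \<rho>)) \<and>
     (\<forall>l\<le>k. \<forall>A\<in>G l. \<forall>a\<in>A. \<forall>b\<in>A. dist a b \<le> B) \<and>
     (\<forall>x\<in>S. k + 1 - d \<le> card {l\<in>{..k}. x \<in> \<Union>(G l)})"

lemma kolm_propD:
  assumes "kolm_prop S k d \<rho> B G"
  shows "\<forall>l\<le>k. \<forall>A\<in>G l. A \<subseteq> S"
    "\<forall>l\<le>k. \<forall>A\<in>G l. \<forall>Ba\<in>G l. A \<noteq> Ba \<longrightarrow> (\<forall>a\<in>A. \<forall>b\<in>Ba. dist a b \<ge> \<rho>)"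
    "\<forall>l\<le>k. \<forall>A\<in>G l. \<forall>a\<in>A. \<forall>b\<in>A. dist a b \<le> B"
    "\<forall>x\<in>S. k + 1 - d \<le> card {l\<in>{..k}. x \<in> \<Union>(G l)}"
proof -
  have H: "(\<forall>l\<le>k. \<forall>A\<in>G l. A \<subseteq> S) \<and>
     (\<forall>l\<le>k. \<forall>A\<in>G l. \<forall>Ba\<in>G l. A \<noteq> Ba \<longrightarrow> (\<forall>a\<in>A. \<forall>b\<in>Ba. dist a b \<ge> \<rho>)) \<and>
     (\<forall>l\<le>k. \<forall>A\<in>G l. \<forall>a\<in>A. \<forall>b\<in>A. dist a b \<le> B) \<and>
     (\<forall>x\<in>S. k + 1 - d \<le> card {l\<in>{..k}. x \<in> \<Union>(G l)})" using assms unfolding kolm_prop_def .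
  show "\<forall>l\<le>k. \<forall>A\<in>G l. A \<subseteq> S" using H by (rule conjunct1)
  show "\<forall>l\<le>k. \<forall>A\<in>G l. \<forall>Ba\<in>G l. A \<noteq> Ba \<longrightarrow> (\<forall>a\<in>A. \<forall>b\<in>Ba. dist a b \<ge> \<rho>)" by (rule H[THEN conjunct2, THEN conjunct1])
  show "\<forall>l\<le>k. \<forall>A\<in>G l. \<forall>a\<in>A. \<forall>b\<in>A. dist a b \<le> B" by (rule H[THEN conjunct2, THEN conjunct2, THEN conjunct1])
  show "\<forall>x\<in>S. k + 1 - d \<le> card {l\<in>{..k}. x \<in> \<Union>(G l)}" by (rule H[THEN conjunct2, THEN conjunct2, THEN conjunct2])
qed

lemma kolm_colorable:
  assumes "colorable S d ((4*real k+4)*\<epsilon>) \<beta>" "\<epsilon> > 0"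
  shows "\<exists>G. kolm_prop S k d \<epsilon> (\<beta> + (4*real k+4)*\<epsilon>) G"
proof -
  obtain C where C: "\<forall>i\<le>d. \<forall>A\<in>C i. A \<subseteq> S" "(\<Union>i\<le>d. \<Union>(C i)) = S"
    "\<forall>i\<le>d. \<forall>A\<in>C i. \<forall>B\<in>C i. A \<noteq> B \<longrightarrow> (\<forall>a\<in>A. \<forall>b\<in>B. dist a b \<ge> (4*real k+4)*\<epsilon>)"
    "\<forall>i\<le>d. \<forall>A\<in>C i. \<forall>a\<in>A. \<forall>b\<in>A. dist a b \<le> \<beta>"
    using assms(1) by (rule colorableE)
  show ?thesis using kolmogorov[OF assms(2) C] unfolding kolm_prop_def by blast
qed

lemma main_lemma:
  fixes X :: "'a::metric_space set" and Y :: "'b::metric_space set" and f :: "'a \<Rightarrow> 'b"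
  assumes fXY: "f ` X \<subseteq> Y" and lsu: "large_scale_uniform X f"
    and hfun: "asdim_fun X f = enat n" and hY: "asdim_le Y m"
  shows "asdim_le X (n + m)"
  unfolding asdim_le_colorable
proof (intro allI impI)
  fix r :: real assume r: "r > 0"
  define k where "k = n + m"
  obtain c where c: "\<forall>r\<ge>0. \<forall>x\<in>X. \<forall>y\<in>X. dist x y \<le> r \<longrightarrow> dist (f x) (f y) \<le> c r"
    using lsu unfolding large_scale_uniform_def by blast
  define R0 where "R0 = \<bar>c r\<bar> + 1"
  have R0: "R0 > 0" unfolding R0_def by simp
  have close: "dist (f x) (f y) < R0" if "x \<in> X" "y \<in> X" "dist x y < r" for x y
  proof -
    have "dist (f x) (f y) \<le> c r" using c r that by force
    then show ?thesis unfolding R0_def by linarith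
  qed
  have "(4*real k+4)*R0 > 0" using R0 by (intro mult_pos_pos) auto
  then obtain Dy where "colorable Y m ((4*real k+4)*R0) Dy" using hY unfolding asdim_le_colorable by blast
  then obtain W where Wk: "kolm_prop Y k m R0 (Dy + (4*real k+4)*R0) W"
    using kolm_colorable R0 by blast
  define D0 where "D0 = Dy + (4*real k+4)*R0"
  have Wf1: "\<forall>l\<le>k. \<forall>A\<in>W l. A \<subseteq> Y"
    and Wf2: "\<forall>l\<le>k. \<forall>A\<in>W l. \<forall>Ba\<in>W l. A \<noteq> Ba \<longrightarrow> (\<forall>a\<in>A. \<forall>b\<in>Ba. dist a b \<ge> R0)"
    and Wf3: "\<forall>l\<le>k. \<forall>A\<in>W l. \<forall>a\<in>A. \<forall>b\<in>A. dist a b \<le> D0"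
    and Wf4: "\<forall>y\<in>Y. k + 1 - m \<le> card {l\<in>{..k}. y \<in> \<Union>(W l)}"
    using kolm_propD[OF Wk] unfolding D0_def by auto
  define R1 where "R1 = \<bar>D0\<bar> + 1"
  have R1: "R1 > 0" "D0 < R1" unfolding R1_def by auto
  obtain D1 where "colorable Y m R1 D1" using hY R1 unfolding asdim_le_colorable by blast
  then obtain V where V1: "\<forall>i\<le>m. \<forall>A\<in>V i. A \<subseteq> Y" and V2: "(\<Union>i\<le>m. \<Union>(V i)) = Y"
    and V3: "\<forall>i\<le>m. \<forall>A\<in>V i. \<forall>B\<in>V i. A \<noteq> B \<longrightarrow> (\<forall>a\<in>A. \<forall>b\<in>B. dist a b \<ge> R1)"
    and V4: "\<forall>i\<le>m. \<forall>A\<in>V i. \<forall>a\<in>A. \<forall>b\<in>A. dist a b \<le> D1"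
    by (rule colorableE)
  define VV where "VV = (\<Union>i\<le>m. V i)"
  have VVb: "\<forall>A\<in>VV. \<forall>p\<in>A. \<forall>q\<in>A. dist p q \<le> D1" unfolding VV_def using V4 by blast
  define P where "P A = {x\<in>X. f x \<in> A}" for A
  have fib_ex: "\<exists>\<beta>. \<forall>A\<in>VV. colorable (P A) n \<rho> \<beta>" if "\<rho> > 0" for \<rho>
    using fiber_lemma[OF hfun that VVb] unfolding P_def .
  define \<beta>f where "\<beta>f \<rho> = (SOME \<beta>. \<forall>A\<in>VV. colorable (P A) n \<rho> \<beta>)" for \<rho>
  have \<beta>f: "\<forall>A\<in>VV. colorable (P A) n \<rho> (\<beta>f \<rho>)" if "\<rho> > 0" for \<rho>
    unfolding \<beta>f_def using someI_ex[OF fib_ex[OF that]] .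
  define Kb where "Kb \<rho> = max 0 (\<beta>f ((4*real k+4)*\<rho>)) + (4*real k+4)*\<rho>" for \<rho>
  have Kb0: "Kb \<rho> \<ge> 0" if "\<rho> > 0" for \<rho>
    unfolding Kb_def using that by (intro add_nonneg_nonneg mult_nonneg_nonneg) auto
  have Qex: "\<exists>G. kolm_prop (P A) k n \<rho> (Kb \<rho>) G" if "\<rho> > 0" "A \<in> VV" for \<rho> A
  proof -
    have "(4*real k+4)*\<rho> > 0" using that by (intro mult_pos_pos) auto
    then have "colorable (P A) n ((4*real k+4)*\<rho>) (\<beta>f ((4*real k+4)*\<rho>))" using \<beta>f that(2) by blast
    then have "colorable (P A) n ((4*real k+4)*\<rho>) (max 0 (\<beta>f ((4*real k+4)*\<rho>)))"
      by (rule colorable_mono_bound) simp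
    then show ?thesis unfolding Kb_def using kolm_colorable that(1) by blast
  qed
  define \<gamma> where "\<gamma> = rec_nat 0 (\<lambda>a g. Kb (2*r + g + 1) + 2*r + 2*g)"
  have \<gamma>0: "\<gamma> 0 = 0" and \<gamma>S: "\<gamma> (Suc a) = Kb (2*r + \<gamma> a + 1) + 2*r + 2*\<gamma> a" for a
    unfolding \<gamma>_def by simp_all
  have \<gamma>nn: "\<gamma> a \<ge> 0" for a
  proof (induction a)
    case 0 then show ?case using \<gamma>0 by simp
  next
    case (Suc a)
    have "Kb (2*r + \<gamma> a + 1) \<ge> 0" using Suc r by (intro Kb0) linarith
    then show ?case using \<gamma>S[of a] Suc r by linarith
  qed
  define \<rho>s where "\<rho>s a = 2*r + \<gamma> a + 1" for a
  have \<rho>s: "\<rho>s a > 0" "\<rho>s a > 2*r + \<gamma> a" for a unfolding \<rho>s_def using r \<gamma>nn[of a] by linarith+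
  define Q where "Q a A = (SOME G. kolm_prop (P A) k n (\<rho>s a) (Kb (\<rho>s a)) G)" for a A
  have Q: "kolm_prop (P A) k n (\<rho>s a) (Kb (\<rho>s a)) (Q a A)" if "a \<le> m" "A \<in> V a" for a A
  proof -
    have "A \<in> VV" unfolding VV_def using that by blast
    then show ?thesis unfolding Q_def using someI_ex[OF Qex[OF \<rho>s(1)]] by blast
  qed
  define E where "E a l = (\<Union>b<a. \<Union>A\<in>V b. \<Union>(Q b A l))" for a l
  define fib where "fib W' = {x\<in>X. f x \<in> W'}" for W'
  have inv: "a \<le> Suc m \<longrightarrow> (\<forall>l\<le>k. \<forall>W'. (\<forall>p\<in>W'. \<forall>q\<in>W'. dist p q \<le> D0) \<longrightarrow> part1 (E a l \<inter> fib W') r (\<gamma> a))" for a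
  proof (induction a)
    case 0
    have "E 0 l = {}" for l unfolding E_def by simp
    then show ?case by (simp add: part1_empty)
  next
    case (Suc a)
    show ?case
    proof (intro impI allI)
      fix l and W' :: "'b set" assume aS: "Suc a \<le> Suc m" and l: "l \<le> k" and W': "\<forall>p\<in>W'. \<forall>q\<in>W'. dist p q \<le> D0"
      have am: "a \<le> m" using aS by simp
      have IH: "part1 (E a l \<inter> fib W') r (\<gamma> a)" using Suc.IH am l W' by simp
      define QQ where "QQ = (\<lambda>Z. Z \<inter> fib W') ` (\<Union>A\<in>V a. Q a A l)"
      have E1: "E (Suc a) l = E a l \<union> (\<Union>A\<in>V a. \<Union>(Q a A l))"
        unfolding E_def by (simp add: lessThan_Suc Un_commute)
      have E2: "\<Union>QQ = (\<Union>(\<Union>A\<in>V a. Q a A l)) \<inter> fib W'"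
        unfolding QQ_def by blast
      have E3: "(\<Union>A\<in>V a. \<Union>(Q a A l)) = \<Union>(\<Union>A\<in>V a. Q a A l)" by blast
      have Eeq: "E (Suc a) l \<inter> fib W' = (E a l \<inter> fib W') \<union> \<Union>QQ"
        unfolding E1 E2 E3 by (rule Int_Un_distrib2)
      have Qd: "\<forall>Q1\<in>QQ. \<forall>Q2\<in>QQ. Q1 \<noteq> Q2 \<longrightarrow> (\<forall>p\<in>Q1. \<forall>q\<in>Q2. dist p q \<ge> \<rho>s a)"
      proof (intro ballI impI)
        fix M1 M2 p q assume M1: "M1 \<in> QQ" and M2: "M2 \<in> QQ" and ne: "M1 \<noteq> M2" and p: "p \<in> M1" and q: "q \<in> M2"
        obtain A1 Z1 where A1: "A1 \<in> V a" "Z1 \<in> Q a A1 l" "M1 = Z1 \<inter> fib W'" using M1 unfolding QQ_def by blast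
        obtain A2 Z2 where A2: "A2 \<in> V a" "Z2 \<in> Q a A2 l" "M2 = Z2 \<inter> fib W'" using M2 unfolding QQ_def by blast
        have fp: "f p \<in> W'" "p \<in> Z1" using p A1(3) unfolding fib_def by auto
        have fq: "f q \<in> W'" "q \<in> Z2" using q A2(3) unfolding fib_def by auto
        have k1: "kolm_prop (P A1) k n (\<rho>s a) (Kb (\<rho>s a)) (Q a A1)" using Q am A1(1) by blast
        have k2: "kolm_prop (P A2) k n (\<rho>s a) (Kb (\<rho>s a)) (Q a A2)" using Q am A2(1) by blast
        have "Z1 \<subseteq> P A1" using kolm_propD(1)[OF k1] l A1(2) by blast
        then have fpA: "f p \<in> A1" using fp(2) unfolding P_def by blast
        have "Z2 \<subseteq> P A2" using kolm_propD(1)[OF k2] l A2(2) by blast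
        then have fqA: "f q \<in> A2" using fq(2) unfolding P_def by blast
        have A12: "A1 = A2"
        proof (rule ccontr)
          assume "A1 \<noteq> A2"
          then have "dist (f p) (f q) \<ge> R1" using V3 am A1(1) A2(1) fpA fqA by blast
          moreover have "dist (f p) (f q) \<le> D0" using W' fp(1) fq(1) by blast
          ultimately show False using R1 by linarith
        qed
        have "Z1 \<noteq> Z2" using ne A1(3) A2(3) by blast
        moreover have "Z2 \<in> Q a A1 l" using A2(2) A12 by simp
        ultimately show "dist p q \<ge> \<rho>s a" using kolm_propD(2)[OF k1] l A1(2) fp(2) fq(2) by blast
      qed
      have Qb: "\<forall>Z\<in>QQ. \<forall>p\<in>Z. \<forall>q\<in>Z. dist p q \<le> Kb (\<rho>s a)"
      proof (intro ballI)
        fix M p q assume M: "M \<in> QQ" and p: "p \<in> M" and q: "q \<in> M"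
        obtain A1 Z1 where A1: "A1 \<in> V a" "Z1 \<in> Q a A1 l" "M = Z1 \<inter> fib W'" using M unfolding QQ_def by blast
        have k1: "kolm_prop (P A1) k n (\<rho>s a) (Kb (\<rho>s a)) (Q a A1)" using Q am A1(1) by blast
        have "p \<in> Z1" "q \<in> Z1" using p q A1(3) by auto
        then show "dist p q \<le> Kb (\<rho>s a)" using kolm_propD(3)[OF k1] l A1(2) by blast
      qed
      have "part1 ((E a l \<inter> fib W') \<union> \<Union>QQ) r (Kb (\<rho>s a) + 2*r + 2*\<gamma> a)"
        using saturate[OF IH r \<gamma>nn[of a] Kb0[OF \<rho>s(1)] \<rho>s(2) Qd Qb] .
      then show "part1 (E (Suc a) l \<inter> fib W') r (\<gamma> (Suc a))"
        using Eeq \<gamma>S[of a] unfolding \<rho>s_def by simp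
    qed
  qed
  define g where "g = \<gamma> (Suc m)"
  have fin: "part1 (E (Suc m) l \<inter> fib W') r g" if "l \<le> k" "W' \<in> W l" for l W'
    using inv[of "Suc m"] Wf3 that unfolding g_def by blast
  define PP where "PP l W' = (SOME FF. (\<forall>A\<in>FF. A \<subseteq> E (Suc m) l \<inter> fib W') \<and> \<Union>FF = E (Suc m) l \<inter> fib W' \<and>
     (\<forall>A\<in>FF. \<forall>B\<in>FF. A \<noteq> B \<longrightarrow> (\<forall>a\<in>A. \<forall>b\<in>B. dist a b \<ge> r)) \<and>
     (\<forall>A\<in>FF. \<forall>a\<in>A. \<forall>b\<in>A. dist a b \<le> g))" for l W'
  have PP: "(\<forall>A\<in>PP l W'. A \<subseteq> E (Suc m) l \<inter> fib W') \<and> \<Union>(PP l W') = E (Suc m) l \<inter> fib W' \<and>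
     (\<forall>A\<in>PP l W'. \<forall>B\<in>PP l W'. A \<noteq> B \<longrightarrow> (\<forall>a\<in>A. \<forall>b\<in>B. dist a b \<ge> r)) \<and>
     (\<forall>A\<in>PP l W'. \<forall>a\<in>A. \<forall>b\<in>A. dist a b \<le> g)" if "l \<le> k" "W' \<in> W l" for l W'
  proof -
    have "\<exists>FF. (\<forall>A\<in>FF. A \<subseteq> E (Suc m) l \<inter> fib W') \<and> \<Union>FF = E (Suc m) l \<inter> fib W' \<and>
     (\<forall>A\<in>FF. \<forall>B\<in>FF. A \<noteq> B \<longrightarrow> (\<forall>a\<in>A. \<forall>b\<in>B. dist a b \<ge> r)) \<and>
     (\<forall>A\<in>FF. \<forall>a\<in>A. \<forall>b\<in>A. dist a b \<le> g)" using fin[OF that] unfolding part1_def .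
    then show ?thesis unfolding PP_def by (rule someI_ex)
  qed
  have PP1: "\<forall>A\<in>PP l W'. A \<subseteq> E (Suc m) l \<inter> fib W'" if "l \<le> k" "W' \<in> W l" for l W'
    by (rule PP[OF that, THEN conjunct1])
  have PP2: "\<Union>(PP l W') = E (Suc m) l \<inter> fib W'" if "l \<le> k" "W' \<in> W l" for l W'
    by (rule PP[OF that, THEN conjunct2, THEN conjunct1])
  have PP3: "\<forall>A\<in>PP l W'. \<forall>B\<in>PP l W'. A \<noteq> B \<longrightarrow> (\<forall>a\<in>A. \<forall>b\<in>B. dist a b \<ge> r)" if "l \<le> k" "W' \<in> W l" for l W'
    by (rule PP[OF that, THEN conjunct2, THEN conjunct2, THEN conjunct1])
  have PP4: "\<forall>A\<in>PP l W'. \<forall>a\<in>A. \<forall>b\<in>A. dist a b \<le> g" if "l \<le> k" "W' \<in> W l" for l W'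
    by (rule PP[OF that, THEN conjunct2, THEN conjunct2, THEN conjunct2])
  define U where "U l = (\<Union>W'\<in>W l. PP l W')" for l
  have U1: "\<forall>l\<le>n+m. \<forall>A\<in>U l. A \<subseteq> X"
  proof (intro allI impI ballI)
    fix l A assume l: "l \<le> n + m" and A: "A \<in> U l"
    then obtain W' where W': "W' \<in> W l" "A \<in> PP l W'" unfolding U_def by blast
    then have "A \<subseteq> E (Suc m) l \<inter> fib W'" using PP1[of l W'] l unfolding k_def by blast
    then show "A \<subseteq> X" unfolding fib_def by blast
  qed
  have U2: "(\<Union>l\<le>n+m. \<Union>(U l)) = X"
  proof (rule equalityI)
    show "(\<Union>l\<le>n+m. \<Union>(U l)) \<subseteq> X" using U1 by blast
    show "X \<subseteq> (\<Union>l\<le>n+m. \<Union>(U l))"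
    proof
      fix x assume x: "x \<in> X"
      then have fx: "f x \<in> Y" using fXY by blast
      define I where "I = {l\<in>{..k}. f x \<in> \<Union>(W l)}"
      have cI: "k + 1 - m \<le> card I" using Wf4 fx unfolding I_def by blast
      obtain a A where aA: "a \<le> m" "A \<in> V a" "f x \<in> A" using V2 fx by blast
      have kA: "kolm_prop (P A) k n (\<rho>s a) (Kb (\<rho>s a)) (Q a A)" using Q aA by blast
      have xP: "x \<in> P A" unfolding P_def using x aA by blast
      define C where "C = {l\<in>{..k}. x \<in> \<Union>(Q a A l)}"
      have cC: "k + 1 - n \<le> card C" using kolm_propD(4)[OF kA] xP unfolding C_def by blast
      have fin1: "finite I" "finite C" unfolding I_def C_def by auto
      have "card (I \<union> C) \<le> card {..k}" unfolding I_def C_def by (intro card_mono) auto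
      then have "card (I \<union> C) \<le> k + 1" by simp
      moreover have "card I + card C = card (I \<union> C) + card (I \<inter> C)" using fin1 by (rule card_Un_Int)
      ultimately have "card (I \<inter> C) > 0" using cI cC unfolding k_def by linarith
      then obtain l where lI: "l \<in> I" and lC: "l \<in> C" by (metis card_gt_0_iff disjoint_iff_not_equal inf_bot_left empty_iff IntE all_not_in_conv)
      obtain W' where W': "W' \<in> W l" "f x \<in> W'" using lI unfolding I_def by blast
      obtain Z where Z: "Z \<in> Q a A l" "x \<in> Z" using lC unfolding C_def by blast
      have lk: "l \<le> k" using lI unfolding I_def by simp
      have "x \<in> E (Suc m) l" unfolding E_def using aA Z by (intro UN_I[of a]) auto
      moreover have "x \<in> fib W'" unfolding fib_def using x W' by blast
      ultimately have "x \<in> \<Union>(PP l W')" using PP2[OF lk W'(1)] by blast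
      then have "x \<in> \<Union>(U l)" unfolding U_def using W'(1) by blast
      then show "x \<in> (\<Union>l\<le>n+m. \<Union>(U l))" using lk unfolding k_def by blast
    qed
  qed
  have U3: "\<forall>l\<le>n+m. \<forall>A\<in>U l. \<forall>B\<in>U l. A \<noteq> B \<longrightarrow> (\<forall>a\<in>A. \<forall>b\<in>B. dist a b \<ge> r)"
  proof (intro allI impI ballI)
    fix l A B p q assume l: "l \<le> n + m" and A: "A \<in> U l" and B: "B \<in> U l" and ne: "A \<noteq> B" and p: "p \<in> A" and q: "q \<in> B"
    have lk: "l \<le> k" using l unfolding k_def .
    obtain W1 where W1: "W1 \<in> W l" "A \<in> PP l W1" using A unfolding U_def by blast
    obtain W2 where W2: "W2 \<in> W l" "B \<in> PP l W2" using B unfolding U_def by blast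
    have "p \<in> fib W1" using PP1[OF lk W1(1)] W1(2) p by blast
    then have pW: "p \<in> X" "f p \<in> W1" unfolding fib_def by blast+
    have "q \<in> fib W2" using PP1[OF lk W2(1)] W2(2) q by blast
    then have qW: "q \<in> X" "f q \<in> W2" unfolding fib_def by blast+
    show "dist p q \<ge> r"
    proof (cases "W1 = W2")
      case True
      then show ?thesis using PP3[OF lk W1(1)] W1(2) W2(2) ne p q by blast
    next
      case False
      show ?thesis
      proof (rule ccontr)
        assume "\<not> r \<le> dist p q"
        then have "dist (f p) (f q) < R0" using close pW(1) qW(1) by simp
        moreover have "dist (f p) (f q) \<ge> R0" using Wf2 lk W1(1) W2(1) False pW(2) qW(2) by blast
        ultimately show False by linarith
      qed
    qed
  qed
  have U4: "\<forall>l\<le>n+m. \<forall>A\<in>U l. \<forall>a\<in>A. \<forall>b\<in>A. dist a b \<le> g"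
  proof (intro allI impI ballI)
    fix l A p q assume l: "l \<le> n + m" and A: "A \<in> U l" and p: "p \<in> A" and q: "q \<in> A"
    have lk: "l \<le> k" using l unfolding k_def .
    obtain W1 where W1: "W1 \<in> W l" "A \<in> PP l W1" using A unfolding U_def by blast
    show "dist p q \<le> g" using PP4[OF lk W1(1)] W1(2) p q by blast
  qed
  show "\<exists>D. colorable X (n + m) r D" using colorableI[OF U1 U2 U3 U4] by blast
qed

theorem mainTheorem1:
  fixes X :: "'a::metric_space set" and Y :: "'b::metric_space set" and f :: "'a \<Rightarrow> 'b"
  assumes "f ` X \<subseteq> Y"
    and "large_scale_uniform X f"
  shows "asdim X \<le> asdim_fun X f + asdim Y"
proof (cases "asdim_fun X f")
  case (enat n)
  show ?thesis
  proof (cases "asdim Y")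
    case (enat m)
    then have "asdim Y \<le> enat m" by simp
    then have "asdim_le Y m" by (rule asdim_le_of_asdim)
    then have "asdim_le X (n + m)" using main_lemma[OF assms] \<open>asdim_fun X f = enat n\<close> by blast
    then have "asdim X \<le> enat (n + m)" by (rule asdim_of_asdim_le)
    then show ?thesis using \<open>asdim_fun X f = enat n\<close> enat by simp
  next
    case infinity
    then show ?thesis by simp
  qed
next
  case infinity
  then show ?thesis by simp
qed

end
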